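(* Let $L$ be a finite lattice, $(x,y,z)\in L^3$ with $x\le y\le z$, let $S_{x,y}$ be a lower cross-cut of $[x,y]$ and $S_{y,z}$ a lower cross-cut of $[y,z]$, and let $S_{x,y,z}=S_{x,y}\sqcup S_{y,z}$. Then $$J(x,y,z)=\sum_{\substack{A\subseteq S_{x,y,z}\\ \bigvee (A\cap S_{x,y})=y\\ \bigvee(A\cap S_{y,z})=z}}(-1)^{|A|}.$$
   Context: For $u\le v$ in $L$, $[u,v]=\{a\in L: u\le a\le v\}$. A lower cross-cut of $[u,v]$ is a set $S\subseteq[u,v]\setminus\{u\}$ such that for every $b\in[u,v]\setminus(S\cup\{u\})$ there is some $a\in S$ with $a<b$. (Note $S_{x,y}\cap S_{y,z}=\emptyset$ since $y\notin S_{y,z}$.) In the sum, $\bigvee(A\cap S_{x,y})$ is the join in $L$, with the join of the empty subset of $S_{x,y}$ taken to be $x$, and $\bigvee(A\cap S_{y,z})$ is the join in $L$, with the join of the empty subset of $S_{y,z}$ taken to be $y$. Let $\delta_3(x,y,z)=1$ if $x=y=z$ and $0$ otherwise. The function $J$ on triples $x\le y\le z$ of $L$ is the unique integer-valued function satisfying $\sum_{x\le a\le y\le b\le z}J(a,y,b)=\delta_3(x,y,z)$ for all $x\le y\le z$ (sum over $a,b\in L$). *)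

theory Defs
  imports Main
begin

text \<open>A finite lattice is modelled as a finite type of class complete_lattice
(every finite nonempty lattice is complete); Sup is the join in L.\<close>

definition interval :: "'a::order \<Rightarrow> 'a \<Rightarrow> 'a set" where
  "interval u v = {a. u \<le> a \<and> a \<le> v}"

definition lower_cross_cut :: "'a::order \<Rightarrow> 'a \<Rightarrow> 'a set \<Rightarrow> bool" where
  "lower_cross_cut u v S \<longleftrightarrow>
     S \<subseteq> interval u v - {u} \<and>
     (\<forall>b \<in> interval u v - (S \<union> {u}). \<exists>a\<in>S. a < b)"

definition join_base :: "'a::complete_lattice \<Rightarrow> 'a set \<Rightarrow> 'a" where
  "join_base e A = (if A = {} then e else Sup A)"

definition J_prop :: "('a::order \<Rightarrow> 'a \<Rightarrow> 'a \<Rightarrow> int) \<Rightarrow> bool" where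
  "J_prop f \<longleftrightarrow> (\<forall>x y z. x \<le> y \<and> y \<le> z \<longrightarrow>
     (\<Sum>a\<in>interval x y. \<Sum>b\<in>interval y z. f a y b) = (if x = y \<and> y = z then 1 else 0))"

text \<open>J is the (on triples x \<le> y \<le> z unique) function satisfying J_prop.\<close>
definition J :: "'a::order \<Rightarrow> 'a \<Rightarrow> 'a \<Rightarrow> int" where
  "J = (SOME f. J_prop f)"

end

theory Submission
  imports Defs
begin

lemma alt_sum:
  assumes "finite S"
  shows "(\<Sum>A\<in>Pow S. (-1::int) ^ card A) = (if S = {} then 1 else 0)"
  using assms
proof (induction S rule: finite_induct)
  case empty
  then show ?case by simp
next
  case (insert a S)
  have "Pow (insert a S) = Pow S \<union> insert a ` Pow S" by (rule Pow_insert)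
  moreover have "Pow S \<inter> insert a ` Pow S = {}" using insert by auto
  moreover have "inj_on (insert a) (Pow S)" unfolding inj_on_def using insert(2) by (metis PowD insert_ident subsetD)
  moreover have "\<And>B. B \<in> Pow S \<Longrightarrow> card (insert a B) = Suc (card B)"
    using insert by (auto intro!: card_insert_disjoint dest: finite_subset)
  ultimately have "(\<Sum>A\<in>Pow (insert a S). (-1::int) ^ card A)
      = (\<Sum>A\<in>Pow S. (-1::int) ^ card A) + (\<Sum>B\<in>Pow S. (-1::int) ^ card (insert a B))"
    using insert by (simp add: sum.union_disjoint sum.reindex)
  also have "\<dots> = 0"
    using \<open>\<And>B. B \<in> Pow S \<Longrightarrow> card (insert a B) = Suc (card B)\<close>
    by (simp add: sum_negf)
  finally show ?case by simp
qed

definition CL :: "'a::complete_lattice \<Rightarrow> 'a \<Rightarrow> 'a set \<Rightarrow> int" where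
  "CL x u S = (\<Sum>A\<in>{A. A \<subseteq> S \<and> join_base x A = u}. (-1::int) ^ card A)"

definition MR :: "'a::complete_lattice \<Rightarrow> 'a \<Rightarrow> int" where
  "MR u y = (\<Sum>A\<in>{A. A \<subseteq> interval u y - {y} \<and> (if A = {} then y else Inf A) = u}. (-1::int) ^ card A)"

lemma finite_all[simp]: "finite (X :: ('a::finite) set)"
  by simp

lemma cl_rec:
  fixes x y w :: "'a::{complete_lattice, finite}"
  assumes cc: "lower_cross_cut x y S" and w: "w \<in> interval x y"
  shows "(\<Sum>u\<in>interval x w. CL x u S) = (if x = w then 1 else 0)"
proof -
  have Ssub: "S \<subseteq> interval x y - {x}" using cc unfolding lower_cross_cut_def by blast
  let ?S' = "{A. A \<subseteq> S \<and> join_base x A \<in> interval x w}"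
  have "(\<Sum>u\<in>interval x w. CL x u S)
      = (\<Sum>u\<in>interval x w. \<Sum>A\<in>{A \<in> ?S'. join_base x A = u}. (-1::int) ^ card A)"
    unfolding CL_def by (rule sum.cong) (auto intro!: sum.cong)
  also have "\<dots> = (\<Sum>A\<in>?S'. (-1::int) ^ card A)"
    by (rule sum.group) auto
  also have "?S' = Pow (S \<inter> {..w})"
  proof (intro set_eqI iffI)
    fix A assume A: "A \<in> ?S'"
    show "A \<in> Pow (S \<inter> {..w})"
    proof (cases "A = {}")
      case False
      then have "Sup A \<le> w" using A unfolding join_base_def interval_def by auto
      then show ?thesis using A by (auto intro: order_trans[OF Sup_upper])
    qed simp
  next
    fix A assume A: "A \<in> Pow (S \<inter> {..w})"
    show "A \<in> ?S'"
    proof (cases "A = {}")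
      case True then show ?thesis using w unfolding join_base_def interval_def by auto
    next
      case False
      then obtain a where a: "a \<in> A" by blast
      have "x \<le> a" using a A Ssub unfolding interval_def by auto
      also have "a \<le> Sup A" using a by (rule Sup_upper)
      finally have "x \<le> Sup A" .
      moreover have "Sup A \<le> w" using A by (auto intro: Sup_least)
      ultimately show ?thesis using A False unfolding join_base_def interval_def by auto
    qed
  qed
  also have "(\<Sum>A\<in>Pow (S \<inter> {..w}). (-1::int) ^ card A) = (if S \<inter> {..w} = {} then 1 else 0)"
    by (rule alt_sum) simp
  also have "(S \<inter> {..w} = {}) = (x = w)"
  proof
    assume e: "S \<inter> {..w} = {}"
    show "x = w"
    proof (rule ccontr)
      assume "x \<noteq> w"
      then have "w \<in> interval x y - (S \<union> {x})" using w e by auto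
      then obtain a where "a \<in> S" "a < w" using cc unfolding lower_cross_cut_def by blast
      then show False using e by auto
    qed
  next
    assume "x = w"
    then show "S \<inter> {..w} = {}" using Ssub unfolding interval_def by auto
  qed
  finally show ?thesis .
qed

lemma mr_rec:
  fixes w y :: "'a::{complete_lattice, finite}"
  assumes "w \<le> y"
  shows "(\<Sum>u\<in>interval w y. MR u y) = (if w = y then 1 else 0)"
proof -
  let ?mb = "\<lambda>A. if A = {} then y else Inf A"
  let ?T = "interval w y - {y}"
  have "(\<Sum>u\<in>interval w y. MR u y)
      = (\<Sum>u\<in>interval w y. \<Sum>A\<in>{A \<in> Pow ?T. ?mb A = u}. (-1::int) ^ card A)"
    unfolding MR_def
  proof (rule sum.cong[OF refl], rule sum.cong)
    fix u assume u: "u \<in> interval w y"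
    show "{A. A \<subseteq> interval u y - {y} \<and> ?mb A = u} = {A \<in> Pow ?T. ?mb A = u}"
    proof (intro set_eqI iffI)
      fix A assume "A \<in> {A. A \<subseteq> interval u y - {y} \<and> ?mb A = u}"
      then show "A \<in> {A \<in> Pow ?T. ?mb A = u}" using u unfolding interval_def by auto
    next
      fix A assume A: "A \<in> {A \<in> Pow ?T. ?mb A = u}"
      show "A \<in> {A. A \<subseteq> interval u y - {y} \<and> ?mb A = u}"
      proof (cases "A = {}")
        case False
        then have "Inf A = u" using A by auto
        then have "\<forall>a\<in>A. u \<le> a" by (auto intro: Inf_lower)
        then show ?thesis using A unfolding interval_def by auto
      qed (use A in auto)
    qed
  qed simp
  also have "\<dots> = (\<Sum>A\<in>Pow ?T. (-1::int) ^ card A)"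
  proof (rule sum.group)
    show "?mb ` Pow ?T \<subseteq> interval w y"
    proof
      fix u assume "u \<in> ?mb ` Pow ?T"
      then obtain A where A0: "A \<in> Pow ?T" and A1: "u = ?mb A" by (rule imageE)
      have A: "A \<subseteq> ?T" "u = ?mb A" using A0 A1 by auto
      show "u \<in> interval w y"
      proof (cases "A = {}")
        case True then show ?thesis using A assms unfolding interval_def by auto
      next
        case False
        then obtain a where a: "a \<in> A" by blast
        have "Inf A \<le> a" using a by (rule Inf_lower)
        also have "a \<le> y" using a A unfolding interval_def by auto
        finally have "Inf A \<le> y" .
        moreover have "w \<le> Inf A" using A by (auto intro!: Inf_greatest simp: interval_def)
        ultimately show ?thesis using A False unfolding interval_def by auto
      qed
    qed
  qed auto
  also have "\<dots> = (if ?T = {} then 1 else 0)" by (rule alt_sum) simp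
  also have "(?T = {}) = (w = y)" using assms unfolding interval_def by auto
  finally show ?thesis .
qed

lemma invA:
  fixes p q :: "'a::{order, finite}"
  assumes m: "\<And>w. w \<in> interval p q \<Longrightarrow> (\<Sum>a\<in>interval p w. m a) = (if p = w then 1 else (0::int))"
    and H: "\<And>x. x \<in> interval p q \<Longrightarrow> H x = (\<Sum>a\<in>interval x q. F a)"
    and pq: "p \<le> q"
  shows "F p = (\<Sum>x\<in>interval p q. m x * H x)"
proof -
  have "(\<Sum>x\<in>interval p q. m x * H x) = (\<Sum>x\<in>interval p q. \<Sum>a\<in>{a. a \<in> interval p q \<and> x \<le> a}. m x * F a)"
    by (rule sum.cong[OF refl]) (auto simp: H sum_distrib_left interval_def intro!: sum.cong)
  also have "\<dots> = (\<Sum>a\<in>interval p q. \<Sum>x\<in>{x. x \<in> interval p q \<and> x \<le> a}. m x * F a)"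
    by (rule sum.swap_restrict) auto
  also have "\<dots> = (\<Sum>a\<in>interval p q. (if p = a then F a else 0))"
  proof (rule sum.cong[OF refl])
    fix a assume a: "a \<in> interval p q"
    have "{x. x \<in> interval p q \<and> x \<le> a} = interval p a" using a unfolding interval_def by auto
    then show "(\<Sum>x\<in>{x. x \<in> interval p q \<and> x \<le> a}. m x * F a) = (if p = a then F a else 0)"
      using m[OF a] by (simp add: sum_distrib_right[symmetric])
  qed
  also have "\<dots> = F p" using pq by (simp add: interval_def)
  finally show ?thesis by simp
qed

lemma invB:
  fixes p q :: "'a::{order, finite}"
  assumes m: "\<And>a. a \<in> interval p q \<Longrightarrow> (\<Sum>z\<in>interval a q. m z) = (if a = q then 1 else (0::int))"
    and H: "\<And>z. z \<in> interval p q \<Longrightarrow> H z = (\<Sum>b\<in>interval p z. G b)"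
    and pq: "p \<le> q"
  shows "G q = (\<Sum>z\<in>interval p q. H z * m z)"
proof -
  have "(\<Sum>z\<in>interval p q. H z * m z) = (\<Sum>z\<in>interval p q. \<Sum>b\<in>{b. b \<in> interval p q \<and> b \<le> z}. G b * m z)"
    by (rule sum.cong[OF refl]) (auto simp: H sum_distrib_right interval_def intro!: sum.cong)
  also have "\<dots> = (\<Sum>b\<in>interval p q. \<Sum>z\<in>{z. z \<in> interval p q \<and> b \<le> z}. G b * m z)"
    by (rule sum.swap_restrict) auto
  also have "\<dots> = (\<Sum>b\<in>interval p q. (if b = q then G b else 0))"
  proof (rule sum.cong[OF refl])
    fix b assume b: "b \<in> interval p q"
    have "{z. z \<in> interval p q \<and> b \<le> z} = interval b q" using b unfolding interval_def by auto
    then show "(\<Sum>z\<in>{z. z \<in> interval p q \<and> b \<le> z}. G b * m z) = (if b = q then G b else 0)"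
      using m[OF b] by (simp add: sum_distrib_left[symmetric])
  qed
  also have "\<dots> = G q" using pq by (simp add: interval_def)
  finally show ?thesis by simp
qed


lemma cl_restrict:
  fixes y b z :: "'a::{complete_lattice, finite}"
  assumes "b \<le> z"
  shows "CL y b (interval y b - {y}) = CL y b (interval y z - {y})"
  unfolding CL_def
proof (rule sum.cong[OF _ refl], intro set_eqI iffI)
  fix A assume "A \<in> {A. A \<subseteq> interval y b - {y} \<and> join_base y A = b}"
  then show "A \<in> {A. A \<subseteq> interval y z - {y} \<and> join_base y A = b}"
    using assms unfolding interval_def by (auto intro: order_trans)
next
  fix A assume A: "A \<in> {A. A \<subseteq> interval y z - {y} \<and> join_base y A = b}"
  show "A \<in> {A. A \<subseteq> interval y b - {y} \<and> join_base y A = b}"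
  proof (cases "A = {}")
    case False
    then have "Sup A = b" using A unfolding join_base_def by auto
    then have "\<forall>a\<in>A. a \<le> b" by (auto intro: Sup_upper)
    then show ?thesis using A unfolding interval_def by auto
  qed (use A in auto)
qed

lemma J_exists:
  "J_prop (\<lambda>(a::'a::{complete_lattice, finite}) y b. MR a y * CL y b (interval y b - {y}))"
  unfolding J_prop_def
proof (intro allI impI, elim conjE)
  fix x y z :: 'a
  assume xy: "x \<le> y" and yz: "y \<le> z"
  have s1: "(\<Sum>a\<in>interval x y. MR a y) = (if x = y then 1 else 0)" by (rule mr_rec[OF xy])
  have "(\<Sum>b\<in>interval y z. CL y b (interval y b - {y})) = (\<Sum>b\<in>interval y z. CL y b (interval y z - {y}))"
    by (rule sum.cong[OF refl], rule cl_restrict) (simp add: interval_def)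
  also have "\<dots> = (if y = z then 1 else 0)"
    by (rule cl_rec) (use yz in \<open>auto simp: lower_cross_cut_def interval_def\<close>)
  finally have s2: "(\<Sum>b\<in>interval y z. CL y b (interval y b - {y})) = (if y = z then 1 else 0)" .
  have "(\<Sum>a\<in>interval x y. \<Sum>b\<in>interval y z. MR a y * CL y b (interval y b - {y}))
      = (\<Sum>a\<in>interval x y. MR a y) * (\<Sum>b\<in>interval y z. CL y b (interval y b - {y}))"
    by (simp add: sum_product)
  also have "\<dots> = (if x = y \<and> y = z then 1 else 0)" using s1 s2 by simp
  finally show "(\<Sum>a\<in>interval x y. \<Sum>b\<in>interval y z. MR a y * CL y b (interval y b - {y}))
      = (if x = y \<and> y = z then 1 else 0)" .
qed

theorem theorem5p9:
  fixes x y z :: "'a::{complete_lattice, finite}"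
    and Sxy Syz :: "'a set"
  assumes "x \<le> y" and "y \<le> z"
    and "lower_cross_cut x y Sxy"
    and "lower_cross_cut y z Syz"
  shows "J x y z =
    (\<Sum>A \<in> {A. A \<subseteq> Sxy \<union> Syz \<and> join_base x (A \<inter> Sxy) = y
                   \<and> join_base y (A \<inter> Syz) = z}. (-1::int) ^ card A)"
proof -
  note xy = assms(1) and yz = assms(2) and c1 = assms(3) and c2 = assms(4)
  have JP: "J_prop (J :: 'a \<Rightarrow> 'a \<Rightarrow> 'a \<Rightarrow> int)"
    unfolding J_def by (rule someI[where P = J_prop, OF J_exists])
  define c where "c = CL x y Sxy"
  have step1: "(\<Sum>b\<in>interval y z'. J x y b) = (if y = z' then c else 0)" if yz': "y \<le> z'" for z'
  proof -
    have "(\<Sum>b\<in>interval y z'. J x y b)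
        = (\<Sum>x'\<in>interval x y. CL x x' Sxy * (if x' = y \<and> y = z' then 1 else 0))"
    proof (rule invA[where F = "\<lambda>a. \<Sum>b\<in>interval y z'. J a y b"])
      show "\<And>w. w \<in> interval x y \<Longrightarrow> (\<Sum>a\<in>interval x w. CL x a Sxy) = (if x = w then 1 else 0)"
        by (rule cl_rec[OF c1])
      show "\<And>x'. x' \<in> interval x y \<Longrightarrow> (if x' = y \<and> y = z' then 1 else 0)
          = (\<Sum>a\<in>interval x' y. \<Sum>b\<in>interval y z'. J a y b)"
        using JP yz' unfolding J_prop_def interval_def by simp
    qed (rule xy)
    also have "\<dots> = (\<Sum>x'\<in>interval x y. if x' = y then (if y = z' then c else 0) else 0)"
      by (rule sum.cong) (auto simp: c_def)
    also have "\<dots> = (if y = z' then c else 0)" using xy by (simp add: interval_def)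
    finally show ?thesis .
  qed
  have step2: "J x y z = (\<Sum>z'\<in>interval y z. (if y = z' then c else 0) * MR z' z)"
  proof (rule invB[where G = "\<lambda>b. J x y b"])
    show "\<And>a. a \<in> interval y z \<Longrightarrow> (\<Sum>z'\<in>interval a z. MR z' z) = (if a = z then 1 else 0)"
      by (rule mr_rec) (simp add: interval_def)
    show "\<And>z'. z' \<in> interval y z \<Longrightarrow> (if y = z' then c else 0) = (\<Sum>b\<in>interval y z'. J x y b)"
      using step1 by (simp add: interval_def)
  qed (rule yz)
  also have "\<dots> = (\<Sum>z'\<in>interval y z. if y = z' then c * MR y z else 0)"
    by (rule sum.cong) auto
  also have "\<dots> = c * MR y z" using yz by (simp add: interval_def)
  finally have J1: "J x y z = c * MR y z" .
  have step3: "MR y z = (\<Sum>x'\<in>interval y z. CL y x' Syz * (if x' = z then 1 else 0))"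
  proof (rule invA[where F = "\<lambda>a. MR a z"])
    show "\<And>w. w \<in> interval y z \<Longrightarrow> (\<Sum>a\<in>interval y w. CL y a Syz) = (if y = w then 1 else 0)"
      by (rule cl_rec[OF c2])
    show "\<And>x'. x' \<in> interval y z \<Longrightarrow> (if x' = z then 1 else 0) = (\<Sum>a\<in>interval x' z. MR a z)"
      by (rule mr_rec[symmetric]) (simp add: interval_def)
  qed (rule yz)
  also have "\<dots> = (\<Sum>x'\<in>interval y z. if x' = z then CL y z Syz else 0)"
    by (rule sum.cong) auto
  also have "\<dots> = CL y z Syz" using yz by (simp add: interval_def)
  finally have J2: "J x y z = CL x y Sxy * CL y z Syz" using J1 c_def by simp
  have D: "Sxy \<inter> Syz = {}"
    using c1 c2 unfolding lower_cross_cut_def interval_def by (auto intro: order.antisym)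
  let ?P1 = "{A. A \<subseteq> Sxy \<and> join_base x A = y}"
  let ?P2 = "{A. A \<subseteq> Syz \<and> join_base y A = z}"
  let ?T = "{A. A \<subseteq> Sxy \<union> Syz \<and> join_base x (A \<inter> Sxy) = y \<and> join_base y (A \<inter> Syz) = z}"
  have "CL x y Sxy * CL y z Syz = (\<Sum>A1\<in>?P1. \<Sum>A2\<in>?P2. (-1::int) ^ card A1 * (-1) ^ card A2)"
    unfolding CL_def by (simp add: sum_product)
  also have "\<dots> = (\<Sum>p\<in>?P1 \<times> ?P2. (-1::int) ^ card (fst p) * (-1) ^ card (snd p))"
    by (simp add: sum.cartesian_product case_prod_beta)
  also have "\<dots> = (\<Sum>A\<in>?T. (-1::int) ^ card A)"
  proof (rule sym, rule sum.reindex_bij_witness[where i = "\<lambda>p. fst p \<union> snd p" and j = "\<lambda>A. (A \<inter> Sxy, A \<inter> Syz)"])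
    fix A assume A: "A \<in> ?T"
    show "fst (A \<inter> Sxy, A \<inter> Syz) \<union> snd (A \<inter> Sxy, A \<inter> Syz) = A" using A by auto
    show "(A \<inter> Sxy, A \<inter> Syz) \<in> ?P1 \<times> ?P2" using A by auto
    have "card A = card (A \<inter> Sxy) + card (A \<inter> Syz)"
    proof -
      have "A = (A \<inter> Sxy) \<union> (A \<inter> Syz)" using A by auto
      then have "card A = card ((A \<inter> Sxy) \<union> (A \<inter> Syz))" by simp
      also have "\<dots> = card (A \<inter> Sxy) + card (A \<inter> Syz)"
        by (rule card_Un_disjoint) (use D in auto)
      finally show ?thesis .
    qed
    then show "(-1::int) ^ card (fst (A \<inter> Sxy, A \<inter> Syz)) * (-1) ^ card (snd (A \<inter> Sxy, A \<inter> Syz))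
        = (-1) ^ card A" by (simp add: power_add)
  next
    fix p assume p: "p \<in> ?P1 \<times> ?P2"
    obtain A1 A2 where pe: "p = (A1, A2)" by (cases p)
    have A1: "A1 \<subseteq> Sxy" "join_base x A1 = y" and A2: "A2 \<subseteq> Syz" "join_base y A2 = z"
      using p pe by auto
    have i1: "(A1 \<union> A2) \<inter> Sxy = A1" using A1 A2 D by auto
    have i2: "(A1 \<union> A2) \<inter> Syz = A2" using A1 A2 D by auto
    show "((fst p \<union> snd p) \<inter> Sxy, (fst p \<union> snd p) \<inter> Syz) = p" using pe i1 i2 by simp
    show "fst p \<union> snd p \<in> ?T" using pe i1 i2 A1 A2 by auto
  qed
  finally show ?thesis using J2 by simp
qed

end
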